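(* In the sleeping multi-armed bandit setting, let $(\ell_t)_{t=1}^T$ be an arbitrary deterministic sequence of loss vectors in $[0,1]^K$ fixed in advance (oblivious adversary), and let $(S_t)_{t\ge1}$ be i.i.d. random nonempty subsets of $[K]$ (independent of the learner's internal randomness at the same round). Then for any algorithm, $$\max_{\pi}R_T^{\mathrm{policy}}(\pi)=\max_{\sigma}\mathbb E\big[R_T^{\mathrm{ordering}}(\sigma)\big],$$ where $\pi$ ranges over all policies and $\sigma$ over all orderings of $[K]$.
   Context: Sleeping multi-armed bandit setting: $K$ arms $[K]$. At each round $t$ a nonempty availability set $S_t\subseteq[K]$ is revealed, the learner (possibly randomized) selects $k_t\in S_t$ and observes $\ell_t(k_t)$. An ordering is a permutation $\sigma=(\sigma_1,\dots,\sigma_K)$ of $[K]$; for nonempty $S\subseteq[K]$, $\sigma(S)=\sigma_m$ with $m=\min\{i:\sigma_i\in S\}$. Ordering regret: $R_T^{\mathrm{ordering}}(\sigma)=\sum_{t=1}^T\big(\ell_t(k_t)-\ell_t(\sigma(S_t))\big)$. A policy is a map $\pi$ from nonempty subsets of $[K]$ to $[K]$ with $\pi(S)\in S$. Policy regret: $R_T^{\mathrm{policy}}(\pi)=\mathbb E\big[\sum_{t=1}^T\ell_t(k_t)-\sum_{t=1}^T\ell_t(\pi(S_t))\big]$, the expectation being over availabilities and the learner's randomness. *)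

theory Defs
  imports "HOL-Probability.Probability" "HOL-Combinatorics.Multiset_Permutations"
begin

text \<open>Arms are the natural numbers 1..K. A round record is (S_t, k_t, observed loss).
  A history is the list of round records of the rounds played so far.\<close>

type_synonym history = "(nat set \<times> nat \<times> real) list"

definition avail_sets :: "nat \<Rightarrow> nat set set" where
  "avail_sets K = {S. S \<subseteq> {1..K} \<and> S \<noteq> {}}"

text \<open>Policies: maps from nonempty subsets of [K] to arms with pi(S) in S
  (extensional outside the relevant domain, so that there are finitely many).\<close>
definition policies :: "nat \<Rightarrow> (nat set \<Rightarrow> nat) set" where
  "policies K = (\<Pi>\<^sub>E S\<in>avail_sets K. S)"

text \<open>Orderings are permutations (lists) of [K]; sigma(S) is the first element of sigma lying in S.\<close>
definition ord_select :: "nat list \<Rightarrow> nat set \<Rightarrow> nat" where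
  "ord_select \<sigma> S = \<sigma> ! (LEAST i. i < length \<sigma> \<and> \<sigma> ! i \<in> S)"

text \<open>D is the distribution of each S_t (drawn i.i.d.);
  A h S is the (randomized) choice of the learner given the history h and the
  current availability set S; l t k is the loss of arm k at round t (oblivious).
  traj n is the distribution of the history after n rounds.\<close>
fun traj :: "nat set pmf \<Rightarrow> (history \<Rightarrow> nat set \<Rightarrow> nat pmf) \<Rightarrow> (nat \<Rightarrow> nat \<Rightarrow> real)
             \<Rightarrow> nat \<Rightarrow> history pmf" where
  "traj D A l 0 = return_pmf []"
| "traj D A l (Suc n) =
     bind_pmf (traj D A l n) (\<lambda>h. bind_pmf D (\<lambda>S. bind_pmf (A h S) (\<lambda>k.
        return_pmf (h @ [(S, k, l (Suc n) k)]))))"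

text \<open>S_t and k_t (t = 1..T) read off a history (0-indexed list).\<close>
definition avail_at :: "history \<Rightarrow> nat \<Rightarrow> nat set" where
  "avail_at h t = fst (h ! (t - 1))"

definition chosen_at :: "history \<Rightarrow> nat \<Rightarrow> nat" where
  "chosen_at h t = fst (snd (h ! (t - 1)))"

definition ordering_regret :: "(nat \<Rightarrow> nat \<Rightarrow> real) \<Rightarrow> nat \<Rightarrow> history \<Rightarrow> nat list \<Rightarrow> real" where
  "ordering_regret l T h \<sigma> =
     (\<Sum>t=1..T. l t (chosen_at h t) - l t (ord_select \<sigma> (avail_at h t)))"

definition policy_regret :: "nat set pmf \<Rightarrow> (history \<Rightarrow> nat set \<Rightarrow> nat pmf) \<Rightarrow> (nat \<Rightarrow> nat \<Rightarrow> real)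
      \<Rightarrow> nat \<Rightarrow> (nat set \<Rightarrow> nat) \<Rightarrow> real" where
  "policy_regret D A l T \<pi> =
     measure_pmf.expectation (traj D A l T)
       (\<lambda>h. (\<Sum>t=1..T. l t (chosen_at h t)) - (\<Sum>t=1..T. l t (\<pi> (avail_at h t))))"

end

theory Submission
  imports Defs
begin

lemma traj_len: "h \<in> set_pmf (traj D A l n) \<Longrightarrow> length h = n"
  by (induction n arbitrary: h) auto

lemma traj_marg: "1 \<le> t \<Longrightarrow> t \<le> n \<Longrightarrow> map_pmf (\<lambda>h. avail_at h t) (traj D A l n) = D"
proof (induction n)
  case 0 then show ?case by simp
next
  case (Suc n)
  have eq: "map_pmf (\<lambda>h. avail_at h t) (traj D A l (Suc n)) =
     bind_pmf (traj D A l n) (\<lambda>h. bind_pmf D (\<lambda>S. bind_pmf (A h S) (\<lambda>k.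
        return_pmf (avail_at (h @ [(S, k, l (Suc n) k)]) t))))"
    by (simp add: map_bind_pmf map_return_pmf)
  show ?case
  proof (cases "t \<le> n")
    case True
    have tn: "t - Suc 0 < n" using True Suc.prems by simp
    have "map_pmf (\<lambda>h. avail_at h t) (traj D A l (Suc n)) =
       bind_pmf (traj D A l n) (\<lambda>h. return_pmf (avail_at h t))"
      unfolding eq
      by (intro bind_pmf_cong refl) (use tn in \<open>auto simp: avail_at_def nth_append
         dest!: traj_len intro!: bind_pmf_const[symmetric]\<close>)
    also have "\<dots> = map_pmf (\<lambda>h. avail_at h t) (traj D A l n)" by (simp add: map_pmf_def)
    finally show ?thesis using Suc True by simp
  next
    case False
    then have t: "t = Suc n" using Suc.prems by simp
    have "map_pmf (\<lambda>h. avail_at h t) (traj D A l (Suc n)) =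
       bind_pmf (traj D A l n) (\<lambda>h. bind_pmf D (\<lambda>S. bind_pmf (A h S) (\<lambda>k. return_pmf S)))"
      unfolding eq
      by (intro bind_pmf_cong refl) (use t traj_len in \<open>auto simp: avail_at_def nth_append\<close>)
    also have "\<dots> = D" by (simp add: bind_return_pmf')
    finally show ?thesis .
  qed
qed

lemma traj_finite:
  assumes "finite (set_pmf D)" "\<And>h S. S \<in> set_pmf D \<Longrightarrow> finite (set_pmf (A h S))"
  shows "finite (set_pmf (traj D A l n))"
  by (induction n) (auto simp: assms)


lemma ord_select_in:
  assumes "set \<sigma> = {1..K}" "S \<subseteq> {1..K}" "S \<noteq> {}"
  shows "ord_select \<sigma> S \<in> S"
proof -
  obtain x where x: "x \<in> S" using assms by auto
  then have "x \<in> set \<sigma>" using assms by auto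
  then obtain j where "j < length \<sigma>" "\<sigma> ! j = x" by (auto simp: in_set_conv_nth)
  then have ex: "\<exists>i. i < length \<sigma> \<and> \<sigma> ! i \<in> S" using x by blast
  show ?thesis unfolding ord_select_def using LeastI_ex[OF ex] by blast
qed

lemma ord_select_min:
  fixes L :: "nat \<Rightarrow> real"
  assumes "sorted (map L \<sigma>)" "k \<in> S" "k \<in> set \<sigma>"
  shows "L (ord_select \<sigma> S) \<le> L k"
proof -
  obtain j where j: "j < length \<sigma>" "\<sigma> ! j = k" using assms by (auto simp: in_set_conv_nth)
  let ?i = "LEAST i. i < length \<sigma> \<and> \<sigma> ! i \<in> S"
  have ij: "?i \<le> j" by (rule Least_le) (use j assms in auto)
  have "map L \<sigma> ! ?i \<le> map L \<sigma> ! j"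
    by (rule sorted_nth_mono[OF assms(1) ij]) (use j in simp)
  then show ?thesis using ij j unfolding ord_select_def by simp
qed

theorem mainTheorem8:
  fixes K T :: nat
    and l :: "nat \<Rightarrow> nat \<Rightarrow> real"
    and D :: "nat set pmf"
    and A :: "history \<Rightarrow> nat set \<Rightarrow> nat pmf"
  assumes loss_range: "\<And>t k. t \<in> {1..T} \<Longrightarrow> k \<in> {1..K} \<Longrightarrow> 0 \<le> l t k \<and> l t k \<le> 1"
    and D_support: "set_pmf D \<subseteq> avail_sets K"
    and A_valid: "\<And>h S. S \<in> avail_sets K \<Longrightarrow> set_pmf (A h S) \<subseteq> S"
  shows "Max (policy_regret D A l T ` policies K)
       = Max ((\<lambda>\<sigma>. measure_pmf.expectation (traj D A l T) (\<lambda>h. ordering_regret l T h \<sigma>))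
                ` permutations_of_set {1..K})"
proof -
  have finAS: "finite (avail_sets K)"
    by (rule finite_subset[of _ "Pow {1..K}"]) (auto simp: avail_sets_def)
  have finD: "finite (set_pmf D)" using D_support finAS finite_subset by blast
  have finA: "finite (set_pmf (A h S))" if "S \<in> set_pmf D" for h S
  proof -
    have "S \<in> avail_sets K" using that D_support by auto
    then have "set_pmf (A h S) \<subseteq> {1..K}" using A_valid[of S h] by (auto simp: avail_sets_def)
    then show ?thesis using finite_subset by blast
  qed
  define P where "P = traj D A l T"
  have finT: "finite (set_pmf P)" unfolding P_def by (rule traj_finite[OF finD finA])
  define E0 where "E0 = measure_pmf.expectation P (\<lambda>h. \<Sum>t=1..T. l t (chosen_at h t))"
  define L where "L k = (\<Sum>t=1..T. l t k)" for k
  define V where "V f = E0 - (\<Sum>S\<in>set_pmf D. L (f S) * pmf D S)" for f :: "nat set \<Rightarrow> nat"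
  have margE: "measure_pmf.expectation P (\<lambda>h. g (avail_at h t)) = (\<Sum>S\<in>set_pmf D. g S * pmf D S)"
    if "t \<in> {1..T}" for g :: "nat set \<Rightarrow> real" and t
  proof -
    have "measure_pmf.expectation P (\<lambda>h. g (avail_at h t))
        = measure_pmf.expectation (map_pmf (\<lambda>h. avail_at h t) P) g" by simp
    also have "map_pmf (\<lambda>h. avail_at h t) P = D" unfolding P_def using that by (intro traj_marg) auto
    also have "measure_pmf.expectation D g = (\<Sum>S\<in>set_pmf D. g S * pmf D S)"
      by (rule integral_measure_pmf_real[OF finD]) auto
    finally show ?thesis .
  qed
  have keyV: "measure_pmf.expectation P (\<lambda>h. (\<Sum>t=1..T. l t (chosen_at h t)) - (\<Sum>t=1..T. l t (f (avail_at h t)))) = V f" for f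
  proof -
    have "measure_pmf.expectation P (\<lambda>h. (\<Sum>t=1..T. l t (chosen_at h t)) - (\<Sum>t=1..T. l t (f (avail_at h t))))
       = E0 - measure_pmf.expectation P (\<lambda>h. \<Sum>t=1..T. l t (f (avail_at h t)))"
      unfolding E0_def by (rule Bochner_Integration.integral_diff) (auto intro: integrable_measure_pmf_finite[OF finT])
    also have "measure_pmf.expectation P (\<lambda>h. \<Sum>t=1..T. l t (f (avail_at h t)))
        = (\<Sum>t=1..T. measure_pmf.expectation P (\<lambda>h. l t (f (avail_at h t))))"
      by (rule Bochner_Integration.integral_sum) (auto intro: integrable_measure_pmf_finite[OF finT])
    also have "\<dots> = (\<Sum>t=1..T. \<Sum>S\<in>set_pmf D. l t (f S) * pmf D S)"
      by (intro sum.cong refl margE)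
    also have "\<dots> = (\<Sum>S\<in>set_pmf D. L (f S) * pmf D S)"
      unfolding L_def by (subst sum.swap) (simp add: sum_distrib_right)
    finally show ?thesis unfolding V_def .
  qed
  have polV: "policy_regret D A l T \<pi> = V \<pi>" for \<pi>
    unfolding policy_regret_def P_def[symmetric] by (rule keyV)
  have ordV: "measure_pmf.expectation (traj D A l T) (\<lambda>h. ordering_regret l T h \<sigma>) = V (ord_select \<sigma>)" for \<sigma>
    unfolding ordering_regret_def P_def[symmetric] sum_subtractf by (rule keyV)
  have Vcong: "V f = V g" if "\<And>S. S \<in> set_pmf D \<Longrightarrow> f S = g S" for f g
    unfolding V_def using that by (intro arg_cong[where f="\<lambda>x. E0 - x"] sum.cong) auto
  define OS where "OS = (\<lambda>\<sigma>. V (ord_select \<sigma>)) ` permutations_of_set {1..K}"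
  define PS where "PS = V ` policies K"
  have finPol: "finite (policies K)" unfolding policies_def
    by (rule finite_PiE[OF finAS]) (auto simp: avail_sets_def intro: finite_subset)
  have sub: "OS \<subseteq> PS"
  proof
    fix x assume "x \<in> OS"
    then obtain \<sigma> where \<sigma>: "\<sigma> \<in> permutations_of_set {1..K}" and x: "x = V (ord_select \<sigma>)"
      unfolding OS_def by auto
    have set\<sigma>: "set \<sigma> = {1..K}" using permutations_of_setD[OF \<sigma>] by simp
    have pol: "restrict (ord_select \<sigma>) (avail_sets K) \<in> policies K"
      unfolding policies_def
      using ord_select_in[OF set\<sigma>] by (auto simp: avail_sets_def)
    have "V (restrict (ord_select \<sigma>) (avail_sets K)) = x"
      unfolding x by (rule Vcong) (use D_support in auto)
    then show "x \<in> PS" unfolding PS_def using pol by blast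
  qed
  define \<sigma>s where "\<sigma>s = sort_key L [1..<K+1]"
  have \<sigma>s: "\<sigma>s \<in> permutations_of_set {1..K}"
    unfolding \<sigma>s_def by (intro permutations_of_setI) auto
  have sorted: "sorted (map L \<sigma>s)" unfolding \<sigma>s_def by simp
  have best: "V \<pi> \<le> V (ord_select \<sigma>s)" if "\<pi> \<in> policies K" for \<pi>
  proof -
    have "L (ord_select \<sigma>s S) * pmf D S \<le> L (\<pi> S) * pmf D S" if S: "S \<in> set_pmf D" for S
    proof -
      have SA: "S \<in> avail_sets K" using S D_support by auto
      then have "\<pi> S \<in> S" using \<open>\<pi> \<in> policies K\<close> unfolding policies_def by auto
      moreover have "\<pi> S \<in> set \<sigma>s" using calculation SA permutations_of_setD[OF \<sigma>s]
        by (auto simp: avail_sets_def)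
      ultimately have "L (ord_select \<sigma>s S) \<le> L (\<pi> S)" by (rule ord_select_min[OF sorted])
      then show ?thesis by (intro mult_right_mono) auto
    qed
    then show ?thesis unfolding V_def by (intro diff_left_mono sum_mono) auto
  qed
  have finPS: "finite PS" unfolding PS_def using finPol by simp
  have finOS: "finite OS" unfolding OS_def by simp
  have OSne: "OS \<noteq> {}" unfolding OS_def using \<sigma>s by auto
  have PSne: "PS \<noteq> {}" using sub OSne by auto
  have "Max OS \<le> Max PS" by (rule Max_mono[OF sub OSne finPS])
  moreover have "Max PS \<le> Max OS"
  proof -
    have "Max PS \<in> PS" by (rule Max_in[OF finPS PSne])
    then obtain \<pi> where "\<pi> \<in> policies K" "Max PS = V \<pi>" unfolding PS_def by auto
    then have "Max PS \<le> V (ord_select \<sigma>s)" using best by simp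
    also have "\<dots> \<le> Max OS" by (rule Max_ge[OF finOS]) (use \<sigma>s in \<open>auto simp: OS_def\<close>)
    finally show ?thesis .
  qed
  ultimately have "Max PS = Max OS" by simp
  moreover have "policy_regret D A l T ` policies K = PS" unfolding PS_def using polV by auto
  moreover have "(\<lambda>\<sigma>. measure_pmf.expectation (traj D A l T) (\<lambda>h. ordering_regret l T h \<sigma>))
                ` permutations_of_set {1..K} = OS" unfolding OS_def using ordV by auto
  ultimately show ?thesis by simp
qed

end
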